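(* Let $B,n'\ge1$ be integers, $n=2Bn'$, and $s\ge 0$. Let $f:\{0,1\}^{n'}\to\{\pm\tfrac12\}$ be a balanced function with $I(f)\le s$. Let $W=\mathrm{Span}\{f_z : z\in\{0,1\}^B\}\subseteq\mathcal{N}=\mathbb{C}^{2^n}$, where $f_z$ is defined below. Then $W$ has dimension at least $2^B$ and $W$ is $(\mathcal{E}_{\mathrm{bitflip}},2s)$ immune.
   Context: A function $g:\{0,1\}^m\to\mathbb{C}$ is identified with the vector $\sum_x g(x)|x\rangle\in\mathbb{C}^{2^m}$. For $g:\{0,1\}^m\to\mathbb{C}$ and $i\in[m]$, $I_i(g)=\mathbb{E}_{x\in\{0,1\}^m}|g(x)-g(x\oplus e_i)|^2$ (with $e_i$ the $i$-th unit vector) and $I(g)=\max_i I_i(g)$. Balanced means $f$ takes each of its two values on exactly half the inputs. Partition $[n]$ into $2B$ consecutive blocks of length $n'$; for $x\in\{0,1\}^n$, $i\in[B]$, $b\in\{0,1\}$, let $x_{i,b}\in\{0,1\}^{n'}$ be the restriction of $x$ to the $(2i-1+b)$-th block. For $z\in\{0,1\}^B$ set $f_z(x)=f(x_{1,z_1})\cdots f(x_{B,z_B})$. For $i\in[n]$, $S\subseteq\{0,1\}^{n-1}$, $E_{i,S}$ is the linear operator with $E_{i,S}|x\rangle=|x\oplus e_i\rangle$ if $(x_1,\dots,x_{i-1},x_{i+1},\dots,x_n)\in S$ and $E_{i,S}|x\rangle=|x\rangle$ otherwise; $\mathcal{E}_{\mathrm{bitflip}}=\{E_{i,S}: i\in[n],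 S\subseteq\{0,1\}^{n-1}\}$. A subspace $\mathcal{M}$ is $(\mathcal{E},\varepsilon)$ immune if for every $X\in\mathcal{E}$ and every $\phi\in\mathcal{M}$, $|\phi^*X\phi|\ge(1-\varepsilon)|\phi^*\phi|$. *)

theory Defs
  imports Complex_Main "HOL-Library.Function_Algebras"
begin

text \<open>Bit strings in {0,1}^m are boolean lists of length m (index 0 = first bit).
  Vectors in C^(2^m) are functions from bit strings to complex numbers
  (vanishing outside the cube).\<close>

definition cube :: "nat \<Rightarrow> bool list set" where
  "cube m = {xs. length xs = m}"

definition flip :: "nat \<Rightarrow> bool list \<Rightarrow> bool list" where
  "flip i x = x[i := (\<not> x ! i)]"

definition delete_at :: "nat \<Rightarrow> bool list \<Rightarrow> bool list" where
  "delete_at i x = take i x @ drop (Suc i) x"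

definition infl :: "nat \<Rightarrow> (bool list \<Rightarrow> complex) \<Rightarrow> nat \<Rightarrow> real" where
  "infl m g i = (\<Sum>x\<in>cube m. (cmod (g x - g (flip i x)))^2) / 2 ^ m"

definition max_infl :: "nat \<Rightarrow> (bool list \<Rightarrow> complex) \<Rightarrow> real" where
  "max_infl m g = Max ((\<lambda>i. infl m g i) ` {..<m})"

definition balanced_pm_half :: "nat \<Rightarrow> (bool list \<Rightarrow> complex) \<Rightarrow> bool" where
  "balanced_pm_half m f \<longleftrightarrow>
     (\<forall>x\<in>cube m. f x = 1/2 \<or> f x = -1/2) \<and>
     2 * card {x\<in>cube m. f x = 1/2} = 2 ^ m \<and>
     2 * card {x\<in>cube m. f x = -1/2} = 2 ^ m"

definition blk :: "nat \<Rightarrow> bool list \<Rightarrow> nat \<Rightarrow> bool \<Rightarrow> bool list" where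
  "blk n' x i b = take n' (drop ((2 * i + (if b then 1 else 0)) * n') x)"

definition fz :: "nat \<Rightarrow> nat \<Rightarrow> (bool list \<Rightarrow> complex) \<Rightarrow> bool list \<Rightarrow> bool list \<Rightarrow> complex" where
  "fz B n' f z = (\<lambda>x. if x \<in> cube (2 * B * n') then (\<Prod>i<B. f (blk n' x i (z ! i))) else 0)"

definition cscale :: "complex \<Rightarrow> (bool list \<Rightarrow> complex) \<Rightarrow> (bool list \<Rightarrow> complex)" where
  "cscale c g = (\<lambda>x. c * g x)"

interpretation cvs: vector_space cscale
  by unfold_locales (auto simp: cscale_def algebra_simps fun_eq_iff)

definition ip :: "nat \<Rightarrow> (bool list \<Rightarrow> complex) \<Rightarrow> (bool list \<Rightarrow> complex) \<Rightarrow> complex" where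
  "ip n phi psi = (\<Sum>x\<in>cube n. cnj (phi x) * psi x)"

text \<open>linear operator on C^(2^n) induced by a map of basis states |x> -> |e x>\<close>
definition basis_op :: "nat \<Rightarrow> (bool list \<Rightarrow> bool list) \<Rightarrow> (bool list \<Rightarrow> complex) \<Rightarrow> (bool list \<Rightarrow> complex)" where
  "basis_op n e phi = (\<lambda>y. \<Sum>x\<in>cube n. if e x = y then phi x else 0)"

definition bitflip_map :: "nat \<Rightarrow> bool list set \<Rightarrow> bool list \<Rightarrow> bool list" where
  "bitflip_map i S x = (if delete_at i x \<in> S then flip i x else x)"

definition E_bitflip :: "nat \<Rightarrow> ((bool list \<Rightarrow> complex) \<Rightarrow> (bool list \<Rightarrow> complex)) set" where
  "E_bitflip n = {basis_op n (bitflip_map i S) | i S. i < n \<and> S \<subseteq> cube (n - 1)}"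

definition immune :: "nat \<Rightarrow> ((bool list \<Rightarrow> complex) \<Rightarrow> (bool list \<Rightarrow> complex)) set \<Rightarrow> real
     \<Rightarrow> (bool list \<Rightarrow> complex) set \<Rightarrow> bool" where
  "immune n E eps M \<longleftrightarrow>
     (\<forall>X\<in>E. \<forall>phi\<in>M. cmod (ip n phi (X phi)) \<ge> (1 - eps) * cmod (ip n phi phi))"

end

theory Submission
  imports Defs
begin

lemma sum_fun_apply: "finite A \<Longrightarrow> (\<Sum>v\<in>A. g v) x = (\<Sum>v\<in>A. (g v :: 'a \<Rightarrow> 'b::comm_monoid_add) x)"
  by (induction A rule: finite_induct) auto

lemma finite_cube[simp]: "finite (cube m)"
  using finite_lists_length_eq[of "UNIV::bool set" m] by (simp add: cube_def)

lemma card_cube: "card (cube m) = 2 ^ m"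
  using card_lists_length_eq[of "UNIV::bool set" m] by (simp add: cube_def)

lemma cube_ne: "cube m \<noteq> {}"
  unfolding cube_def by (metis (mono_tags) empty_iff length_replicate mem_Collect_eq)

lemma length_flip[simp]: "length (flip i x) = length x"
  by (simp add: flip_def)

lemma flip_cube[simp]: "(flip i x \<in> cube m) = (x \<in> cube m)"
  by (simp add: cube_def)

lemma flip_flip[simp]: "flip i (flip i x) = x"
  by (cases "i < length x") (auto simp: flip_def list_update_beyond)

lemma nth_flip: "flip i x ! p = (if p = i \<and> i < length x then \<not> x ! i else x ! p)"
  by (auto simp: flip_def nth_list_update list_update_beyond)

definition bk :: "nat \<Rightarrow> nat \<Rightarrow> bool list \<Rightarrow> bool list" where
  "bk n' k x = take n' (drop (k * n') x)"

lemma bk_app0: "length u = n' \<Longrightarrow> bk n' 0 (u @ v) = u"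
  by (simp add: bk_def)

lemma bk_appS: "length u = n' \<Longrightarrow> bk n' (Suc k) (u @ v) = bk n' k v"
  by (simp add: bk_def)

lemma fact_sum:
  "(\<Sum>x\<in>cube (m * n'). \<Prod>k<m. g k (bk n' k x)) = (\<Prod>k<m. \<Sum>u\<in>cube n'. (g k u :: complex))"
proof (induction m arbitrary: g)
  case 0
  then show ?case by (simp add: cube_def)
next
  case (Suc m)
  have bij: "bij_betw (\<lambda>(u,v). u @ v) (cube n' \<times> cube (m * n')) (cube (Suc m * n'))"
  proof (rule bij_betw_imageI)
    show "inj_on (\<lambda>(u, v). u @ v) (cube n' \<times> cube (m * n'))"
      by (auto simp: inj_on_def cube_def)
    show "(\<lambda>(u, v). u @ v) ` (cube n' \<times> cube (m * n')) = cube (Suc m * n')"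
    proof
      show "(\<lambda>(u, v). u @ v) ` (cube n' \<times> cube (m * n')) \<subseteq> cube (Suc m * n')"
        by (auto simp: cube_def)
      show "cube (Suc m * n') \<subseteq> (\<lambda>(u, v). u @ v) ` (cube n' \<times> cube (m * n'))"
      proof
        fix x assume "x \<in> cube (Suc m * n')"
        then have "(take n' x, drop n' x) \<in> cube n' \<times> cube (m * n')" by (auto simp: cube_def)
        then show "x \<in> (\<lambda>(u, v). u @ v) ` (cube n' \<times> cube (m * n'))"
          by (metis (no_types, lifting) append_take_drop_id case_prod_conv image_eqI)
      qed
    qed
  qed
  have "(\<Sum>x\<in>cube (Suc m * n'). \<Prod>k<Suc m. g k (bk n' k x))
      = (\<Sum>p\<in>cube n' \<times> cube (m * n'). \<Prod>k<Suc m. g k (bk n' k (fst p @ snd p)))"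
    using sum.reindex_bij_betw[OF bij, symmetric] by (simp add: case_prod_beta)
  also have "\<dots> = (\<Sum>p\<in>cube n' \<times> cube (m * n'). g 0 (fst p) * (\<Prod>k<m. g (Suc k) (bk n' k (snd p))))"
    by (rule sum.cong) (auto simp del: prod.lessThan_Suc simp add: prod.lessThan_Suc_shift bk_app0 bk_appS cube_def)
  also have "\<dots> = (\<Sum>u\<in>cube n'. g 0 u) * (\<Sum>v\<in>cube (m * n'). \<Prod>k<m. g (Suc k) (bk n' k v))"
    by (simp add: sum_product sum.cartesian_product case_prod_beta)
  also have "\<dots> = (\<Sum>u\<in>cube n'. g 0 u) * (\<Prod>k<m. \<Sum>u\<in>cube n'. g (Suc k) u)"
    using Suc.IH[of "\<lambda>k. g (Suc k)"] by simp
  also have "\<dots> = (\<Prod>k<Suc m. \<Sum>u\<in>cube n'. g k u)"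
    by (simp del: prod.lessThan_Suc add: prod.lessThan_Suc_shift)
  finally show ?case .
qed

lemma bk_flip:
  assumes "length x = m * n'" "i < m * n'" "k < m"
  shows "bk n' k (flip i x) = (if k = i div n' then flip (i mod n') (bk n' k x) else bk n' k x)"
proof -
  have np: "n' > 0" using assms by (cases n') auto
  have lk: "length (bk n' k y) = n'" if "length y = m * n'" for y
  proof -
    have "(k+1) * n' \<le> m * n'" using assms by (intro mult_right_mono) auto
    then show ?thesis using that by (simp add: bk_def algebra_simps)
  qed
  have kn: "k * n' + n' \<le> m * n'"
    using mult_right_mono[of "k+1" m n'] assms by simp
  have nk: "bk n' k y ! j = y ! (k * n' + j)" if "j < n'" "length y = m * n'" for y j
    using that kn assms(3) by (simp add: bk_def)
  have ar: "(k * n' + j = i) \<longleftrightarrow> (k = i div n' \<and> j = i mod n')" if "j < n'" for j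
    using that np by (metis div_mult_self1 div_less add.commute mod_mult_self2 mod_less
        mult.commute neq0_conv div_mult_mod_eq add_0 )
  show ?thesis
    apply (rule nth_equalityI)
    using assms lk ar nk np
    by (auto simp: nth_flip)
qed


definition Fb :: "(bool list \<Rightarrow> complex) \<Rightarrow> bool list \<Rightarrow> nat \<Rightarrow> bool list \<Rightarrow> complex" where
  "Fb f z k u = (if z ! (k div 2) = odd k then f u else 1)"

definition Dg :: "nat \<Rightarrow> (bool list \<Rightarrow> complex) \<Rightarrow> bool list \<Rightarrow> complex" where
  "Dg i g = (\<lambda>x. g x - g (flip i x))"

definition Gb :: "(bool list \<Rightarrow> complex) \<Rightarrow> bool list \<Rightarrow> nat \<Rightarrow> nat \<Rightarrow> nat \<Rightarrow> bool list \<Rightarrow> complex" where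
  "Gb f z kk r k u = (if k = kk then Fb f z k u - Fb f z k (flip r u) else Fb f z k u)"

definition nrm :: "nat \<Rightarrow> (bool list \<Rightarrow> complex) \<Rightarrow> real" where
  "nrm m g = (\<Sum>x\<in>cube m. (cmod (g x))^2)"

lemma prod_pair: "(\<Prod>k<2*B. h k) = (\<Prod>l<B. h (2*l) * h (2*l+1))"
  for h :: "nat \<Rightarrow> 'a::comm_monoid_mult"
  by (induction B) (auto simp: mult_ac)

lemma fz_prod:
  assumes "x \<in> cube (2*B*n')"
  shows "fz B n' f z x = (\<Prod>k<2*B. Fb f z k (bk n' k x))"
proof -
  have "fz B n' f z x = (\<Prod>l<B. f (blk n' x l (z ! l)))" using assms by (simp add: fz_def)
  also have "\<dots> = (\<Prod>l<B. Fb f z (2*l) (bk n' (2*l) x) * Fb f z (2*l+1) (bk n' (2*l+1) x))"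
    by (rule prod.cong) (auto simp: Fb_def blk_def bk_def)
  also have "\<dots> = (\<Prod>k<2*B. Fb f z k (bk n' k x))" by (rule prod_pair[symmetric])
  finally show ?thesis .
qed

lemma Dfz_prod:
  assumes "x \<in> cube (2*B*n')" "i < 2*B*n'"
  shows "Dg i (fz B n' f z) x = (\<Prod>k<2*B. Gb f z (i div n') (i mod n') k (bk n' k x))"
proof -
  define kk where "kk = i div n'"
  define r where "r = i mod n'"
  have kk: "kk < 2*B" using assms(2) unfolding kk_def
    by (metis less_mult_imp_div_less mult.commute)
  have fx: "flip i x \<in> cube (2*B*n')" using assms by simp
  have lx: "length x = 2*B*n'" using assms by (simp add: cube_def)
  let ?R = "\<Prod>k\<in>{..<2*B} - {kk}. Fb f z k (bk n' k x)"
  have "fz B n' f z x = Fb f z kk (bk n' kk x) * ?R"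
    using fz_prod[OF assms(1)] prod.remove[of "{..<2*B}" kk] kk by simp
  moreover have "fz B n' f z (flip i x) = Fb f z kk (flip r (bk n' kk x)) * ?R"
  proof -
    have "fz B n' f z (flip i x) = (\<Prod>k<2*B. Fb f z k (bk n' k (flip i x)))"
      using fz_prod[OF fx] .
    also have "\<dots> = (\<Prod>k<2*B. Fb f z k (if k = kk then flip r (bk n' k x) else bk n' k x))"
      by (rule prod.cong) (use bk_flip[OF lx assms(2)] in \<open>auto simp: kk_def r_def\<close>)
    also have "\<dots> = Fb f z kk (flip r (bk n' kk x)) * ?R"
    proof -
      have "(\<Prod>k\<in>{..<2*B}-{kk}. Fb f z k (if k = kk then flip r (bk n' k x) else bk n' k x)) = ?R"
        by (rule prod.cong) auto
      moreover have "(\<Prod>k<2*B. Fb f z k (if k = kk then flip r (bk n' k x) else bk n' k x))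
        = Fb f z kk (if kk = kk then flip r (bk n' kk x) else bk n' kk x) *
          (\<Prod>k\<in>{..<2*B}-{kk}. Fb f z k (if k = kk then flip r (bk n' k x) else bk n' k x))"
        by (rule prod.remove) (use kk in auto)
      ultimately show ?thesis by simp
    qed
    finally show ?thesis .
  qed
  moreover have "(\<Prod>k<2*B. Gb f z kk r k (bk n' k x)) = (Fb f z kk (bk n' kk x) - Fb f z kk (flip r (bk n' kk x))) * ?R"
  proof -
    have "(\<Prod>k<2*B. Gb f z kk r k (bk n' k x)) = Gb f z kk r kk (bk n' kk x) *
       (\<Prod>k\<in>{..<2*B}-{kk}. Gb f z kk r k (bk n' k x))"
      by (rule prod.remove) (use kk in auto)
    moreover have "(\<Prod>k\<in>{..<2*B}-{kk}. Gb f z kk r k (bk n' k x)) = ?R"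
      by (rule prod.cong) (auto simp: Gb_def)
    ultimately show ?thesis by (simp add: Gb_def)
  qed
  ultimately show ?thesis by (simp add: Dg_def kk_def r_def algebra_simps)
qed

lemma ip_prod:
  assumes "\<And>x. x \<in> cube (m*n') \<Longrightarrow> g x = (\<Prod>k<m. G k (bk n' k x))"
    and "\<And>x. x \<in> cube (m*n') \<Longrightarrow> h x = (\<Prod>k<m. H k (bk n' k x))"
  shows "ip (m*n') g h = (\<Prod>k<m. \<Sum>u\<in>cube n'. cnj (G k u) * H k u)"
proof -
  have "ip (m*n') g h = (\<Sum>x\<in>cube (m*n'). \<Prod>k<m. cnj (G k (bk n' k x)) * H k (bk n' k x))"
    unfolding ip_def by (rule sum.cong) (auto simp: assms prod.distrib cnj_prod)
  also have "\<dots> = (\<Prod>k<m. \<Sum>u\<in>cube n'. cnj (G k u) * H k u)"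
    by (rule fact_sum)
  finally show ?thesis .
qed

lemma ip_self: "ip m g g = of_real (nrm m g)"
  unfolding ip_def nrm_def of_real_sum
proof (rule sum.cong)
  fix x show "cnj (g x) * g x = of_real ((cmod (g x))^2)"
    using complex_norm_square[of "g x"] by (simp add: mult.commute)
qed simp

lemma nrm_prod:
  assumes "\<And>x. x \<in> cube (m*n') \<Longrightarrow> g x = (\<Prod>k<m. G k (bk n' k x))"
  shows "nrm (m*n') g = (\<Prod>k<m. nrm n' (G k))"
proof -
  have "of_real (nrm (m*n') g) = (of_real (\<Prod>k<m. nrm n' (G k)) :: complex)"
    unfolding ip_self[symmetric] of_real_prod
    by (subst ip_prod[of m n' g G g G, OF assms assms]) (simp_all add: ip_self[symmetric] ip_def)
  then show ?thesis using of_real_eq_iff by blast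
qed

lemma sum_f0:
  assumes "balanced_pm_half n' f"
  shows "(\<Sum>u\<in>cube n'. f u) = 0"
proof -
  let ?A = "{x\<in>cube n'. f x = 1/2}" and ?B = "{x\<in>cube n'. f x = -1/2}"
  have c: "card ?A = card ?B" using assms unfolding balanced_pm_half_def by simp
  have "(\<Sum>u\<in>cube n'. f u) = (\<Sum>u\<in>cube n'. if f u = 1/2 then 1/2 else -1/2)"
    by (rule sum.cong) (use assms in \<open>auto simp: balanced_pm_half_def\<close>)
  also have "\<dots> = (\<Sum>u\<in>?A. 1/2) + (\<Sum>u\<in>cube n' \<inter> - {x. f x = 1/2}. -1/2)"
    by (simp add: sum.If_cases Collect_conj_eq Int_commute)
  also have "cube n' \<inter> - {x. f x = 1/2} = ?B"
    using assms unfolding balanced_pm_half_def by auto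
  finally show ?thesis using c by simp
qed

lemma fac_zero:
  assumes "balanced_pm_half n' f" "z ! (k div 2) \<noteq> w ! (k div 2)"
  shows "(\<Sum>u\<in>cube n'. cnj (Fb f z k u) * Fb f w k u) = 0"
proof (cases "z ! (k div 2) = odd k")
  case True
  then have "(\<Sum>u\<in>cube n'. cnj (Fb f z k u) * Fb f w k u) = cnj (\<Sum>u\<in>cube n'. f u)"
    using assms(2) by (simp add: Fb_def cnj_sum)
  then show ?thesis using sum_f0[OF assms(1)] by simp
next
  case False
  then have "(\<Sum>u\<in>cube n'. cnj (Fb f z k u) * Fb f w k u) = (\<Sum>u\<in>cube n'. f u)"
    using assms(2) by (simp add: Fb_def)
  then show ?thesis using sum_f0[OF assms(1)] by simp
qed

lemma diff_pos:
  assumes "z \<in> cube B" "w \<in> cube B" "z \<noteq> w"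
  shows "\<exists>l<B. z ! l \<noteq> w ! l"
  using assms nth_equalityI[of z w] by (auto simp: cube_def)

lemma ortho_fz:
  assumes "balanced_pm_half n' f" "z \<in> cube B" "w \<in> cube B" "z \<noteq> w"
  shows "ip (2*B*n') (fz B n' f z) (fz B n' f w) = 0"
proof -
  obtain l where l: "l < B" "z ! l \<noteq> w ! l" using diff_pos[OF assms(2-4)] by blast
  have "ip (2*B*n') (fz B n' f z) (fz B n' f w) = (\<Prod>k<2*B. \<Sum>u\<in>cube n'. cnj (Fb f z k u) * Fb f w k u)"
    by (rule ip_prod) (rule fz_prod, simp)+
  also have "\<dots> = 0"
    by (rule prod_zero) (use l fac_zero[OF assms(1), of z "2*l" w] in auto)
  finally show ?thesis .
qed

lemma ortho_D:
  assumes "balanced_pm_half n' f" "z \<in> cube B" "w \<in> cube B" "z \<noteq> w" "i < 2*B*n'"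
  shows "ip (2*B*n') (Dg i (fz B n' f z)) (Dg i (fz B n' f w)) = 0"
proof -
  obtain l where l: "l < B" "z ! l \<noteq> w ! l" using diff_pos[OF assms(2-4)] by blast
  define kk where "kk = i div n'"
  define r where "r = i mod n'"
  obtain k where k: "k < 2*B" "k \<noteq> kk" "k div 2 = l"
  proof (cases "2*l = kk")
    case True
    then show ?thesis using that[of "2*l+1"] l by auto
  next
    case False
    then show ?thesis using that[of "2*l"] l by auto
  qed
  have "ip (2*B*n') (Dg i (fz B n' f z)) (Dg i (fz B n' f w))
     = (\<Prod>k<2*B. \<Sum>u\<in>cube n'. cnj (Gb f z kk r k u) * Gb f w kk r k u)"
    unfolding kk_def r_def
    by (rule ip_prod; rule Dfz_prod; simp add: assms)
  also have "\<dots> = 0"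
  proof (rule prod_zero)
    show "\<exists>a\<in>{..<2*B}. (\<Sum>u\<in>cube n'. cnj (Gb f z kk r a u) * Gb f w kk r a u) = 0"
      by (rule bexI[of _ k]) (use k l fac_zero[OF assms(1), of z k w] in \<open>auto simp: Gb_def\<close>)
  qed simp
  finally show ?thesis .
qed

lemma f_vals:
  assumes "balanced_pm_half n' f" "u \<in> cube n'"
  shows "(cmod (f u))^2 = 1/4"
proof -
  have "f u = 1/2 \<or> f u = -1/2" using assms unfolding balanced_pm_half_def by auto
  then have "cmod (f u) = cmod (1/2::complex)" by (metis norm_minus_cancel minus_divide_left)
  then have c: "cmod (f u) = 1/2" by (simp add: norm_divide)
  show ?thesis by (subst c) (simp add: power2_eq_square)
qed

lemma nrm_f:
  assumes "balanced_pm_half n' f"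
  shows "nrm n' f = 2^n' / 4"
proof -
  have "nrm n' f = (\<Sum>u\<in>cube n'. 1/4)" unfolding nrm_def
    by (rule sum.cong) (auto simp: f_vals[OF assms])
  then show ?thesis by (simp add: card_cube)
qed

lemma nrm_Fb_pos:
  assumes "balanced_pm_half n' f"
  shows "nrm n' (Fb f z k) > 0"
proof (cases "z ! (k div 2) = odd k")
  case True
  then have "nrm n' (Fb f z k) = nrm n' f" by (simp add: Fb_def nrm_def)
  moreover have "nrm n' f > 0"
  proof -
    have "(2::real)^n' / 4 > 0" by simp
    then show ?thesis using nrm_f[OF assms] by linarith
  qed
  ultimately show ?thesis by simp
next
  case False
  then have "nrm n' (Fb f z k) = (\<Sum>u\<in>cube n'. 1)" by (simp add: Fb_def nrm_def)
  then show ?thesis using card_cube[of n'] by simp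
qed

lemma nrm_fz_pos:
  assumes "balanced_pm_half n' f"
  shows "nrm (2*B*n') (fz B n' f z) > 0"
proof -
  have "nrm (2*B*n') (fz B n' f z) = (\<Prod>k<2*B. nrm n' (Fb f z k))"
    by (rule nrm_prod) (rule fz_prod, simp)
  then show ?thesis using nrm_Fb_pos[OF assms] by (simp add: prod_pos)
qed


lemma nrm_nonneg: "nrm m g \<ge> 0"
  unfolding nrm_def by (simp add: sum_nonneg)

lemma nrm_D_bound:
  assumes bal: "balanced_pm_half n' f" and mi: "max_infl n' f \<le> s" and s: "s \<ge> 0"
    and i: "i < 2*B*n'"
  shows "nrm (2*B*n') (Dg i (fz B n' f z)) \<le> 4 * s * nrm (2*B*n') (fz B n' f z)"
proof -
  define kk where "kk = i div n'"
  define r where "r = i mod n'"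
  have np: "n' > 0" using i by (cases n') auto
  have rl: "r < n'" using np by (simp add: r_def)
  have kk: "kk < 2*B" using i unfolding kk_def by (metis less_mult_imp_div_less mult.commute)
  have e1: "nrm (2*B*n') (Dg i (fz B n' f z)) = (\<Prod>k<2*B. nrm n' (Gb f z kk r k))"
    unfolding kk_def r_def by (rule nrm_prod) (rule Dfz_prod, simp, rule i)
  have e2: "nrm (2*B*n') (fz B n' f z) = (\<Prod>k<2*B. nrm n' (Fb f z k))"
    by (rule nrm_prod) (rule fz_prod, simp)
  let ?R = "\<Prod>k\<in>{..<2*B}-{kk}. nrm n' (Fb f z k)"
  have "(\<Prod>k<2*B. nrm n' (Gb f z kk r k)) = nrm n' (Gb f z kk r kk) * (\<Prod>k\<in>{..<2*B}-{kk}. nrm n' (Gb f z kk r k))"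
    by (rule prod.remove) (use kk in auto)
  also have "(\<Prod>k\<in>{..<2*B}-{kk}. nrm n' (Gb f z kk r k)) = ?R"
  proof (rule prod.cong)
    fix k assume "k \<in> {..<2*B}-{kk}"
    then have "Gb f z kk r k = Fb f z k" by (auto simp: Gb_def fun_eq_iff)
    then show "nrm n' (Gb f z kk r k) = nrm n' (Fb f z k)" by simp
  qed simp
  finally have e3: "(\<Prod>k<2*B. nrm n' (Gb f z kk r k)) = nrm n' (Gb f z kk r kk) * ?R" .
  have e4: "(\<Prod>k<2*B. nrm n' (Fb f z k)) = nrm n' (Fb f z kk) * ?R"
    by (rule prod.remove) (use kk in auto)
  have key: "nrm n' (Gb f z kk r kk) \<le> 4 * s * nrm n' (Fb f z kk)"
  proof (cases "z ! (kk div 2) = odd kk")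
    case True
    have "nrm n' (Gb f z kk r kk) = (\<Sum>u\<in>cube n'. (cmod (f u - f (flip r u)))^2)"
      using True by (simp add: nrm_def Gb_def Fb_def)
    also have "\<dots> = 2^n' * infl n' f r" by (simp add: infl_def)
    also have "\<dots> \<le> 2^n' * s"
    proof -
      have "infl n' f r \<le> max_infl n' f" unfolding max_infl_def
        by (rule Max_ge) (use rl in auto)
      then show ?thesis using mi by simp
    qed
    also have "\<dots> = 4 * s * nrm n' (Fb f z kk)"
    proof -
      have "Fb f z kk = f" using True by (simp add: Fb_def fun_eq_iff)
      then show ?thesis using nrm_f[OF bal] by simp
    qed
    finally show ?thesis .
  next
    case False
    have "nrm n' (Gb f z kk r kk) = 0" using False by (simp add: nrm_def Gb_def Fb_def)
    then show ?thesis using s nrm_nonneg[of n' "Fb f z kk"] by simp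
  qed
  have "?R \<ge> 0" by (simp add: prod_nonneg nrm_nonneg)
  then have "nrm n' (Gb f z kk r kk) * ?R \<le> 4 * s * nrm n' (Fb f z kk) * ?R"
    using key by (rule mult_right_mono[rotated])
  then show ?thesis using e1 e2 e3 e4 by (simp add: mult.assoc)
qed

lemma norm_sum_ortho:
  assumes "finite Z" and orth: "\<And>z w. z \<in> Z \<Longrightarrow> w \<in> Z \<Longrightarrow> z \<noteq> w \<Longrightarrow> ip m (g z) (g w) = 0"
  shows "nrm m (\<lambda>x. \<Sum>z\<in>Z. a z * g z x) = (\<Sum>z\<in>Z. (cmod (a z))^2 * nrm m (g z))"
proof -
  let ?h = "\<lambda>x. \<Sum>z\<in>Z. a z * g z x"
  have "ip m ?h ?h = (\<Sum>x\<in>cube m. \<Sum>z\<in>Z. \<Sum>w\<in>Z. cnj (a z) * a w * (cnj (g z x) * g w x))"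
    unfolding ip_def cnj_sum sum_product by (simp add: algebra_simps)
  also have "\<dots> = (\<Sum>z\<in>Z. \<Sum>x\<in>cube m. \<Sum>w\<in>Z. cnj (a z) * a w * (cnj (g z x) * g w x))"
    by (rule sum.swap)
  also have "\<dots> = (\<Sum>z\<in>Z. \<Sum>w\<in>Z. \<Sum>x\<in>cube m. cnj (a z) * a w * (cnj (g z x) * g w x))"
    by (rule sum.cong[OF refl], rule sum.swap)
  also have "\<dots> = (\<Sum>z\<in>Z. \<Sum>w\<in>Z. if w = z then cnj (a z) * a z * ip m (g z) (g z) else 0)"
  proof (intro sum.cong refl)
    fix z w assume "z \<in> Z" "w \<in> Z"
    then show "(\<Sum>x\<in>cube m. cnj (a z) * a w * (cnj (g z x) * g w x)) =
      (if w = z then cnj (a z) * a z * ip m (g z) (g z) else 0)"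
    proof -
      have d: "(\<Sum>x\<in>cube m. cnj (a z) * a w * (cnj (g z x) * g w x)) = cnj (a z) * a w * ip m (g z) (g w)"
        unfolding ip_def by (rule sum_distrib_left[symmetric])
      show ?thesis unfolding d using orth[of z w] \<open>z \<in> Z\<close> \<open>w \<in> Z\<close> by auto
    qed
  qed
  also have "\<dots> = (\<Sum>z\<in>Z. cnj (a z) * a z * ip m (g z) (g z))"
    using assms(1) by simp
  also have "\<dots> = of_real (\<Sum>z\<in>Z. (cmod (a z))^2 * nrm m (g z))"
    unfolding of_real_sum
  proof (rule sum.cong[OF refl])
    fix z show "cnj (a z) * a z * ip m (g z) (g z) = of_real ((cmod (a z))^2 * nrm m (g z))"
      using complex_norm_square[of "a z"] by (simp add: ip_self mult.commute)
  qed
  finally show ?thesis unfolding ip_self using of_real_eq_iff by blast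
qed

lemma cmod_diff_sq: "(cmod (a - b))^2 = (cmod a)^2 + (cmod b)^2 - 2 * Re (cnj a * b)"
  by (simp only: cmod_power2) (simp add: power2_eq_square algebra_simps)

lemma delete_at_flip[simp]: "delete_at i (flip i x) = delete_at i x"
  by (simp add: delete_at_def flip_def)


theorem theorem2:
  fixes B n' n :: nat and s :: real and f :: "bool list \<Rightarrow> complex"
  assumes "B \<ge> 1" and "n' \<ge> 1" and "n = 2 * B * n'" and "s \<ge> 0"
    and "balanced_pm_half n' f"
    and "max_infl n' f \<le> s"
  defines "W \<equiv> cvs.span (fz B n' f ` cube B)"
  shows "cvs.dim W \<ge> 2 ^ B \<and> immune n (E_bitflip n) (2 * s) W"
proof -
  note bal = assms(5)
  define Z where "Z = cube B"
  define F where "F = fz B n' f"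
  have finZ: "finite Z" by (simp add: Z_def)
  have orth: "\<And>z w. z \<in> Z \<Longrightarrow> w \<in> Z \<Longrightarrow> z \<noteq> w \<Longrightarrow> ip n (F z) (F w) = 0"
    unfolding Z_def F_def assms(3) by (rule ortho_fz[OF bal])
  have pos: "\<And>z. nrm n (F z) > 0"
    unfolding F_def assms(3) by (rule nrm_fz_pos[OF bal])
  have inj: "inj_on F Z"
  proof (rule inj_onI, rule ccontr)
    fix z w assume zw: "z \<in> Z" "w \<in> Z" "F z = F w" "z \<noteq> w"
    have "ip n (F z) (F z) = 0" using orth[OF zw(1,2,4)] zw(3) by simp
    then show False using pos[of z] by (simp add: ip_self)
  qed
  have rep: "\<exists>a. \<forall>x. phi x = (\<Sum>z\<in>Z. a z * F z x)" if "phi \<in> W" for phi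
  proof -
    have "phi \<in> range (\<lambda>u. \<Sum>v\<in>F ` Z. cscale (u v) v)"
      using that cvs.span_finite[of "F ` Z"] finZ unfolding W_def Z_def F_def by auto
    then obtain u where u: "phi = (\<Sum>v\<in>F ` Z. cscale (u v) v)" by blast
    show ?thesis
    proof (intro exI allI)
      fix x
      have "phi x = (\<Sum>v\<in>F ` Z. u v * v x)"
        unfolding u by (simp add: sum_fun_apply finZ cscale_def)
      also have "\<dots> = (\<Sum>z\<in>Z. u (F z) * F z x)"
        by (simp add: sum.reindex[OF inj])
      finally show "phi x = (\<Sum>z\<in>Z. (u \<circ> F) z * F z x)" by simp
    qed
  qed
  have dim: "cvs.dim W \<ge> 2 ^ B"
  proof -
    have indep: "\<not> cvs.dependent (F ` Z)"
    proof
      assume "cvs.dependent (F ` Z)"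
      then obtain u where u: "\<exists>v\<in>F ` Z. u v \<noteq> 0" "(\<Sum>v\<in>F ` Z. cscale (u v) v) = 0"
        using cvs.dependent_finite[of "F ` Z"] finZ by auto
      have z0: "\<And>x. (\<Sum>z\<in>Z. u (F z) * F z x) = 0"
      proof -
        fix x
        have "(\<Sum>v\<in>F ` Z. cscale (u v) v) x = 0" using u(2) by simp
        then show "(\<Sum>z\<in>Z. u (F z) * F z x) = 0"
          by (simp add: sum_fun_apply finZ cscale_def sum.reindex[OF inj])
      qed
      have "nrm n (\<lambda>x. \<Sum>z\<in>Z. u (F z) * F z x) = (\<Sum>z\<in>Z. (cmod (u (F z)))^2 * nrm n (F z))"
        by (rule norm_sum_ortho[OF finZ orth])
      moreover have "nrm n (\<lambda>x. \<Sum>z\<in>Z. u (F z) * F z x) = 0" by (simp add: z0 nrm_def)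
      ultimately have "(\<Sum>z\<in>Z. (cmod (u (F z)))^2 * nrm n (F z)) = 0" by simp
      then have "\<forall>z\<in>Z. (cmod (u (F z)))^2 * nrm n (F z) = 0"
        by (subst (asm) sum_nonneg_eq_0_iff[OF finZ]) (simp_all add: nrm_nonneg)
      then have "\<forall>z\<in>Z. u (F z) = 0" using pos by (simp add: less_le)
      then show False using u(1) by auto
    qed
    have "cvs.dim W = card (F ` Z)"
      unfolding W_def Z_def[symmetric] F_def[symmetric] by (rule cvs.dim_span_eq_card_independent[OF indep])
    also have "\<dots> = 2 ^ B" using card_image[OF inj] card_cube[of B] by (simp add: Z_def)
    finally show ?thesis by simp
  qed
  have imm: "immune n (E_bitflip n) (2 * s) W"
    unfolding immune_def
  proof (intro ballI)
    fix X phi assume X: "X \<in> E_bitflip n" and phi: "phi \<in> W"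
    obtain i S0 where iS: "X = basis_op n (bitflip_map i S0)" "i < n"
      using X by (auto simp: E_bitflip_def)
    define e where "e = bitflip_map i S0"
    have ee: "e (e y) = y" for y by (simp add: e_def bitflip_map_def)
    have ec: "e y \<in> cube n \<longleftrightarrow> y \<in> cube n" for y by (simp add: e_def bitflip_map_def)
    have bij: "bij_betw e (cube n) (cube n)"
      by (rule bij_betw_byWitness[of _ e]) (auto simp: ec ee)
    have Xphi: "X phi y = phi (e y)" if "y \<in> cube n" for y
    proof -
      have "X phi y = (\<Sum>x\<in>cube n. if x = e y then phi x else 0)"
        unfolding iS basis_op_def e_def[symmetric]
      proof (rule sum.cong[OF refl])
        fix x have "(e x = y) = (x = e y)" using ee by metis
        then show "(if e x = y then phi x else 0) = (if x = e y then phi x else 0)" by simp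
      qed
      also have "\<dots> = phi (e y)" using that ec by simp
      finally show ?thesis .
    qed
    obtain a where a: "\<And>x. phi x = (\<Sum>z\<in>Z. a z * F z x)" using rep[OF phi] by blast
    have nphi: "nrm n phi = (\<Sum>z\<in>Z. (cmod (a z))^2 * nrm n (F z))"
    proof -
      have "phi = (\<lambda>x. \<Sum>z\<in>Z. a z * F z x)" using a by auto
      then show ?thesis using norm_sum_ortho[OF finZ orth] by simp
    qed
    have nD: "nrm n (Dg i phi) \<le> 4 * s * nrm n phi"
    proof -
      have "Dg i phi = (\<lambda>x. \<Sum>z\<in>Z. a z * Dg i (F z) x)"
        by (simp add: Dg_def a fun_eq_iff sum_subtractf right_diff_distrib)
      moreover have "\<And>z w. z \<in> Z \<Longrightarrow> w \<in> Z \<Longrightarrow> z \<noteq> w \<Longrightarrow> ip n (Dg i (F z)) (Dg i (F w)) = 0"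
        unfolding Z_def F_def assms(3) by (rule ortho_D[OF bal], auto simp: iS(2)[unfolded assms(3)])
      ultimately have "nrm n (Dg i phi) = (\<Sum>z\<in>Z. (cmod (a z))^2 * nrm n (Dg i (F z)))"
        using norm_sum_ortho[OF finZ] by simp
      also have "\<dots> \<le> (\<Sum>z\<in>Z. (cmod (a z))^2 * (4 * s * nrm n (F z)))"
      proof (rule sum_mono, rule mult_left_mono)
        fix z show "nrm n (Dg i (F z)) \<le> 4 * s * nrm n (F z)"
          unfolding F_def assms(3) by (rule nrm_D_bound[OF bal assms(6,4)]) (use iS(2) assms(3) in simp)
      qed simp
      also have "\<dots> = 4 * s * nrm n phi" by (simp add: nphi sum_distrib_left mult_ac)
      finally show ?thesis .
    qed
    have sq: "(\<Sum>y\<in>cube n. (cmod (phi y - phi (e y)))^2) \<le> nrm n (Dg i phi)"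
      unfolding nrm_def Dg_def
    proof (rule sum_mono)
      fix y show "(cmod (phi y - phi (e y)))^2 \<le> (cmod (phi y - phi (flip i y)))^2"
        by (simp add: e_def bitflip_map_def)
    qed
    have se: "(\<Sum>y\<in>cube n. (cmod (phi (e y)))^2) = nrm n phi"
      unfolding nrm_def using sum.reindex_bij_betw[OF bij, of "\<lambda>y. (cmod (phi y))^2"] by simp
    have "(\<Sum>y\<in>cube n. (cmod (phi y - phi (e y)))^2)
        = nrm n phi + nrm n phi - 2 * Re (ip n phi (X phi))"
    proof -
      have "(\<Sum>y\<in>cube n. (cmod (phi y - phi (e y)))^2) =
         (\<Sum>y\<in>cube n. (cmod (phi y))^2) + (\<Sum>y\<in>cube n. (cmod (phi (e y)))^2)
           - 2 * (\<Sum>y\<in>cube n. Re (cnj (phi y) * phi (e y)))"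
        by (simp add: cmod_diff_sq sum.distrib sum_subtractf sum_distrib_left)
      moreover have "Re (ip n phi (X phi)) = (\<Sum>y\<in>cube n. Re (cnj (phi y) * phi (e y)))"
        unfolding ip_def Re_sum by (rule sum.cong) (auto simp: Xphi)
      ultimately show ?thesis using se by (simp add: nrm_def)
    qed
    then have re: "Re (ip n phi (X phi)) \<ge> (1 - 2 * s) * nrm n phi"
      using sq nD by (simp add: algebra_simps)
    have "cmod (ip n phi phi) = nrm n phi" by (simp add: ip_self nrm_nonneg)
    moreover have "Re (ip n phi (X phi)) \<le> cmod (ip n phi (X phi))" by (rule complex_Re_le_cmod)
    ultimately show "(1 - 2 * s) * cmod (ip n phi phi) \<le> cmod (ip n phi (X phi))"
      using re by simp
  qed
  show ?thesis using dim imm by simp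
qed

end
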